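(* Let $1\le i\le n-2$, $\pi_1\in\mathfrak S_i(1243,2143,321)$ and $\pi_2\in\mathfrak S_{n-i}(1243,2143,321)$. Then $\pi_1*\pi_2\in\mathfrak S_n(1243,2143,321)$ if and only if all of the following hold: (i) at least one of $\pi_1,\pi_2$ has first entry $1$; (ii) the entries $2,3,\dots,i$ appear in increasing order in $\pi_1$; (iii) the entries $\pi_2(2),\pi_2(3),\dots,\pi_2(n-i)$ are increasing.
   Context: $\mathfrak S_m(R)$ is the set of permutations of $\{1,\dots,m\}$ avoiding every pattern in $R$ (no subsequence with the same relative order as a pattern). For nonempty permutations $\pi_1,\pi_2$: let $\tilde\pi_1$ be obtained by adding $|\pi_2|-1$ to every entry of $\pi_1$ and then replacing the entry equal to $|\pi_2|$ by the first entry of $\pi_2$; let $\tilde\pi_2$ be $\pi_2$ with its first entry deleted; then $\pi_1*\pi_2=\tilde\pi_1,\ N,\ \tilde\pi_2$ (concatenation) where $N=|\pi_1|+|\pi_2|$. E.g. $3124*15342=716895342$. *)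

theory Defs
  imports Main "HOL-Library.Sublist"
begin

text \<open>Permutations of {1,...,m} are represented as lists in one-line notation.\<close>

definition is_perm :: "nat \<Rightarrow> nat list \<Rightarrow> bool" where
  "is_perm m p \<longleftrightarrow> length p = m \<and> distinct p \<and> set p = {1..m}"

definition order_iso :: "nat list \<Rightarrow> nat list \<Rightarrow> bool" where
  "order_iso s q \<longleftrightarrow> length s = length q \<and>
     (\<forall>a < length s. \<forall>b < length s. (s ! a < s ! b \<longleftrightarrow> q ! a < q ! b))"

definition contains :: "nat list \<Rightarrow> nat list \<Rightarrow> bool" where
  "contains p q \<longleftrightarrow> (\<exists>s. subseq s p \<and> order_iso s q)"

definition Av :: "nat \<Rightarrow> nat list set \<Rightarrow> nat list set" where
  "Av m R = {p. is_perm m p \<and> (\<forall>q\<in>R. \<not> contains p q)}"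

definition star :: "nat list \<Rightarrow> nat list \<Rightarrow> nat list" where
  "star p1 p2 =
     (let m = length p2; N = length p1 + length p2;
          t1 = map (\<lambda>x. if x + m - 1 = m then hd p2 else x + m - 1) p1
      in t1 @ [N] @ tl p2)"

lemma "star [3,1,2,4] [1,5,3,4,2] = [7,1,6,8,9,5,3,4,2]"
  by (simp add: star_def)

end

theory Submission
  imports Defs
begin

lemma subseq_setD: "subseq xs ys \<Longrightarrow> set xs \<subseteq> set ys"
  by (induct rule: list_emb.induct) auto

lemma sorted_map_mono: "sorted (xs::nat list) \<Longrightarrow> (\<And>x y. x \<le> y \<Longrightarrow> g x \<le> (g y::nat)) \<Longrightarrow> sorted (map g xs)"
  unfolding sorted_map by (erule sorted_wrt_mono_rel[rotated]) blast

lemma sorted_pair: "sorted ys \<Longrightarrow> subseq [x,y] ys \<Longrightarrow> x \<le> (y::nat)"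
proof -
  assume s: "sorted ys" and h: "subseq [x,y] ys"
  from list_emb_ConsD[OF h] obtain us v vs where "ys = us @ v # vs" "x = v" "subseq [y] vs" by auto
  then show ?thesis using s by (auto simp: sorted_append subseq_singleton_left)
qed

lemma pair_append: "subseq [x,y] (L @ Y) \<Longrightarrow>
   subseq [x,y] L \<or> (x \<in> set L \<and> y \<in> set Y) \<or> subseq [x,y] Y"
  by (auto simp: subseq_append_iff Cons_eq_append_conv append_eq_Cons_conv subseq_singleton_left)

lemma pair_Cons: "subseq [x,y] (b # L) \<Longrightarrow> (x = b \<and> y \<in> set L) \<or> subseq [x,y] L"
  by (auto simp: subseq_singleton_left split: if_splits)

lemma not_sorted_desc: "\<not> sorted (l::nat list) \<Longrightarrow> \<exists>x y. subseq [x,y] l \<and> y < x"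
proof (induction l)
  case Nil then show ?case by simp
next
  case (Cons a l)
  show ?case
  proof (cases "sorted l")
    case True
    then obtain y where "y \<in> set l" "y < a" using Cons.prems by (auto simp: not_le)
    then have "subseq [a,y] (a#l)" by (simp add: subseq_singleton_left)
    then show ?thesis using \<open>y < a\<close> by blast
  next
    case False
    then obtain x y where "subseq [x,y] l" "y < x" using Cons.IH by blast
    then show ?thesis by (meson list_emb_Cons)
  qed
qed

lemma ext3: "contains s [3,2,1] \<Longrightarrow> \<exists>a b c. subseq [a,b,c] s \<and> b < a \<and> c < b"
proof -
  assume "contains s [3,2,1]"
  then obtain t where t: "subseq t s" "order_iso t [3,2,1]" unfolding contains_def by blast
  then have l: "length t = 3" and o: "\<forall>a<3. \<forall>b<3. (t!a < t!b \<longleftrightarrow> [3,2,1::nat]!a < [3,2,1::nat]!b)"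
    unfolding order_iso_def by auto
  from l obtain a b c where tt: "t = [a,b,c]"
    by (cases t; cases "tl t"; cases "tl (tl t)"; auto)
  have f1: "b < a" using o[rule_format, of 1 0] tt by simp
  have f2: "c < b" using o[rule_format, of 2 1] tt by simp
  have f0: "subseq [a,b,c] s" using t(1) tt by simp
  show ?thesis
    by (rule exI[of _ a], rule exI[of _ b], rule exI[of _ c]) (intro conjI; fact)
qed

lemma ext4: "contains s [p,q,r,u] \<Longrightarrow> \<exists>a b c d. subseq [a,b,c,d] s \<and>
   (a < b \<longleftrightarrow> p < q) \<and> (b < a \<longleftrightarrow> q < p) \<and> (b < d \<longleftrightarrow> q < u) \<and> (a < d \<longleftrightarrow> p < u)
   \<and> (d < c \<longleftrightarrow> u < r)"
proof -
  assume "contains s [p,q,r,u]"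
  then obtain t where t: "subseq t s" "order_iso t [p,q,r,u]" unfolding contains_def by blast
  then have l: "length t = 4" and o: "\<forall>a<4. \<forall>b<4. (t!a < t!b \<longleftrightarrow> [p,q,r,u]!a < [p,q,r,u]!b)"
    unfolding order_iso_def by auto
  from l obtain a b c d where tt: "t = [a,b,c,d]"
    by (cases t; cases "tl t"; cases "tl (tl t)"; cases "tl (tl (tl t))"; auto)
  have f1: "(a < b \<longleftrightarrow> p < q)" using o[rule_format, of 0 1] tt by simp
  have f2: "(b < a \<longleftrightarrow> q < p)" using o[rule_format, of 1 0] tt by simp
  have f3: "(b < d \<longleftrightarrow> q < u)" using o[rule_format, of 1 3] tt by simp
  have f4: "(a < d \<longleftrightarrow> p < u)" using o[rule_format, of 0 3] tt by simp
  have f5: "(d < c \<longleftrightarrow> u < r)" using o[rule_format, of 3 2] tt by simp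
  have f0: "subseq [a,b,c,d] s" using t(1) tt by simp
  show ?thesis
    by (rule exI[of _ a], rule exI[of _ b], rule exI[of _ c], rule exI[of _ d]) (intro conjI; fact)
qed

lemma iso3: "b < a \<Longrightarrow> c < b \<Longrightarrow> order_iso [a,b,c] [3,2,1::nat]"
  unfolding order_iso_def by (auto simp: less_Suc_eq numeral_3_eq_3 nth_Cons')

lemma sub_tr: "subseq x y \<Longrightarrow> subseq y z \<Longrightarrow> subseq x z"
  using subseq_order.order_trans by blast

lemma G:
  fixes as bs ys :: "nat list" and b :: nat
  assumes s: "\<sigma> = as @ b # bs @ ys"
    and sab: "sorted (as @ bs)"
    and bl: "\<forall>x\<in>set (as @ bs). b < x"
    and yl: "\<forall>x\<in>set (as @ bs). \<forall>y\<in>set ys. y < x"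
    and sy: "sorted ys"
    and c4: "as = [] \<or> (\<forall>y\<in>set ys. b < y)"
    and bn: "b \<notin> set ys"
  shows "\<not> contains \<sigma> [3,2,1] \<and> \<not> contains \<sigma> [1,2,4,3] \<and> \<not> contains \<sigma> [2,1,4,3]"
proof -
  define L where "L = as @ b # bs"
  have sL: "\<sigma> = L @ ys" using s L_def by simp
  have disj: "y \<in> set L \<Longrightarrow> y \<notin> set ys" for y
    using yl bn unfolding L_def by fastforce
  have setL: "x \<in> set L \<Longrightarrow> x = b \<or> x \<in> set (as @ bs)" for x unfolding L_def by auto
  have D: "x \<in> set L \<and> (y \<in> set ys \<or> (y = b \<and> x \<in> set as))"
    if h: "subseq [x,y] \<sigma>" "y < x" for x y
  proof -
    from pair_append[OF h(1)[unfolded sL]]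
    consider (a) "subseq [x,y] L" | (b) "x \<in> set L \<and> y \<in> set ys" | (c) "subseq [x,y] ys" by blast
    then show ?thesis
    proof cases
      case a
      then have xL: "x \<in> set L" using subseq_setD[OF a] by simp
      from pair_append[OF a[unfolded L_def]]
      consider (a1) "subseq [x,y] as" | (a2) "x \<in> set as \<and> y \<in> set (b # bs)" | (a3) "subseq [x,y] (b#bs)" by blast
      then show ?thesis
      proof cases
        case a1
        then have "x \<le> y" using sab sorted_pair by (auto simp: sorted_append)
        then show ?thesis using that by simp
      next
        case a2
        then show ?thesis
        proof (cases "y = b")
          case False
          then have "y \<in> set bs" using a2 by simp
          then have "x \<le> y" using a2 sab by (auto simp: sorted_append)
          then show ?thesis using that by simp
        qed (use a2 xL in auto)
      next
        case a3
        from pair_Cons[OF a3] show ?thesis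
        proof
          assume A: "x = b \<and> y \<in> set bs"
          then have "b < y" using bl by simp
          then show ?thesis using that A by simp
        next
          assume "subseq [x,y] bs"
          then have "x \<le> y" using sab sorted_pair by (auto simp: sorted_append)
          then show ?thesis using that by simp
        qed
      qed
    next
      case b then show ?thesis by simp
    next
      case c then have "x \<le> y" using sy sorted_pair by auto
      then show ?thesis using that by simp
    qed
  qed
  have E: "x \<in> set L" if h: "subseq [x,y] \<sigma>" "y \<in> set L" for x y
  proof -
    from pair_append[OF h(1)[unfolded sL]] h(2) disj subseq_setD[of "[x,y]" L] subseq_setD[of "[x,y]" ys]
    show ?thesis by auto
  qed
  have p1: "subseq [a,b'] [a,b',c]" "subseq [b',c] [a,b',c]" "subseq [a,c] [a,b',c]" for a b' c :: nat
    by auto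
  have q1: "subseq [a,c] [a,b',c,d]" "subseq [b',c] [a,b',c,d]" "subseq [c,d] [a,b',c,d]" for a b' c d :: nat
    by auto
  have n3: "\<not> contains \<sigma> [3,2,1]"
  proof
    assume "contains \<sigma> [3,2,1]"
    then obtain a b' c where h: "subseq [a,b',c] \<sigma>" "b' < a" "c < b'" using ext3 by blast
    have h1: "subseq [a,b'] \<sigma>" "subseq [b',c] \<sigma>" using p1 h(1) sub_tr by blast+
    have d1: "b' = b" "a \<in> set as" using D[OF h1(1) h(2)] D[OF h1(2) h(3)] disj by auto
    then have "as \<noteq> []" by auto
    then have all: "\<forall>y\<in>set ys. b < y" using c4 by simp
    from D[OF h1(2) h(3)] d1 h all show False by auto
  qed
  have n4: "\<not> contains \<sigma> [p,q,4,3]" if pq: "p < 3" "q < 3" "p \<noteq> q" for p q :: nat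
  proof
    assume "contains \<sigma> [p,q,4,3]"
    then obtain a b' c d where h: "subseq [a,b',c,d] \<sigma>" "a \<noteq> b'" "b' < d" "a < d" "d < c"
      using ext4[of \<sigma> p q 4 3] pq by (auto simp: linorder_neq_iff)
    have h1: "subseq [a,c] \<sigma>" "subseq [b',c] \<sigma>" "subseq [c,d] \<sigma>" using q1 h(1) sub_tr by blast+
    have cL: "c \<in> set L" using D[OF h1(3) h(5)] by simp
    have aL: "a \<in> set L" "b' \<in> set L" using E[OF h1(1) cL] E[OF h1(2) cL] by auto
    from conjunct2[OF D[OF h1(3) h(5)]] show False
    proof
      assume dy: "d \<in> set ys"
      have "a \<notin> set (as @ bs)"
      proof
        assume "a \<in> set (as @ bs)" then have "d < a" using yl dy by blast
        then show False using h(4) by simp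
      qed
      then have "a = b" using setL[OF aL(1)] by blast
      moreover have "b' \<notin> set (as @ bs)"
      proof
        assume "b' \<in> set (as @ bs)" then have "d < b'" using yl dy by blast
        then show False using h(3) by simp
      qed
      then have "b' = b" using setL[OF aL(2)] by blast
      ultimately show False using h(2) by simp
    next
      assume db: "d = b \<and> c \<in> set as"
      have "a \<notin> set (as @ bs)"
      proof
        assume "a \<in> set (as @ bs)" then have "b < a" using bl by blast
        then show False using h(4) db by simp
      qed
      then have "a = b" using setL[OF aL(1)] by blast
      then show False using h(4) db by simp
    qed
  qed
  show ?thesis using n3 n4[of 1 2] n4[of 2 1] by simp
qed


theorem mainTheorem13:
  fixes i n :: nat and p1 p2 :: "nat list"
  assumes "1 \<le> i" and "i \<le> n - 2"
    and "p1 \<in> Av i {[1,2,4,3], [2,1,4,3], [3,2,1]}"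
    and "p2 \<in> Av (n - i) {[1,2,4,3], [2,1,4,3], [3,2,1]}"
  shows "star p1 p2 \<in> Av n {[1,2,4,3], [2,1,4,3], [3,2,1]} \<longleftrightarrow>
           ((hd p1 = 1 \<or> hd p2 = 1)
            \<and> sorted (filter (\<lambda>x. 2 \<le> x) p1)
            \<and> sorted (tl p2))"
proof -
  define m where "m = n - i"
  have m2: "m \<ge> 2" and nim: "n = i + m" using assms(1,2) unfolding m_def by auto
  have P1: "length p1 = i" "distinct p1" "set p1 = {1..i}"
    using assms(3) unfolding Av_def is_perm_def by auto
  have P2: "length p2 = m" "distinct p2" "set p2 = {1..m}"
    using assms(4) unfolding Av_def is_perm_def m_def by auto
  define b where "b = hd p2"
  define ys where "ys = tl p2"
  have p2e: "p2 = b # ys" using P2(1) m2 unfolding b_def ys_def by (cases p2) auto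
  have bm: "1 \<le> b" "b \<le> m" using P2(3) p2e by auto
  have ysm: "\<forall>y\<in>set ys. 1 \<le> y \<and> y \<le> m" using P2(3) p2e by auto
  have bny: "b \<notin> set ys" and dys: "distinct ys" using P2(2) p2e by auto
  have ysne: "ys \<noteq> []" using P2(1) m2 p2e by auto
  have "1 \<in> set p1" using P1(3) assms(1) by auto
  then obtain as0 bs0 where p1e: "p1 = as0 @ 1 # bs0" by (meson split_list)
  have asb: "\<forall>x\<in>set as0 \<union> set bs0. 2 \<le> x \<and> x \<le> i"
  proof
    fix x assume x: "x \<in> set as0 \<union> set bs0"
    then have "x \<noteq> 1" using P1(2) p1e by auto
    moreover have "x \<in> {1..i}" using x P1(3) p1e by auto
    ultimately show "2 \<le> x \<and> x \<le> i" by auto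
  qed
  define g where "g = (\<lambda>x::nat. x + m - 1)"
  define f where "f = (\<lambda>x. if x + m - 1 = m then b else x + m - 1)"
  have st0: "star p1 p2 = map f p1 @ [n] @ ys"
    unfolding star_def Let_def P1(1) P2(1) f_def b_def ys_def nim by (rule refl)
  have fa: "map f as0 = map g as0"
  proof (rule map_cong[OF refl])
    fix x assume "x \<in> set as0" then have "2 \<le> x" using asb by auto
    then show "f x = g x" using m2 unfolding g_def f_def by auto
  qed
  have fb: "map f bs0 = map g bs0"
  proof (rule map_cong[OF refl])
    fix x assume "x \<in> set bs0" then have "2 \<le> x" using asb by auto
    then show "f x = g x" using m2 unfolding g_def f_def by auto
  qed
  have f1: "f 1 = b" unfolding f_def using m2 by simp
  have st: "star p1 p2 = map g as0 @ b # map g bs0 @ n # ys"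
  proof -
    have "map f p1 = map g as0 @ b # map g bs0" using p1e fa fb f1 by simp
    then show ?thesis using st0 by simp
  qed
  have filt: "filter (\<lambda>x. 2 \<le> x) p1 = as0 @ bs0"
    using asb p1e by (auto intro: filter_True)
  have hd1: "hd p1 = 1 \<longleftrightarrow> as0 = []"
    using asb p1e by (cases as0) auto
  have gbig: "\<forall>x\<in>set as0 \<union> set bs0. m < g x \<and> g x < n"
  proof
    fix x assume x: "x \<in> set as0 \<union> set bs0"
    then have "2 \<le> x" "x \<le> i" using asb by auto
    then show "m < g x \<and> g x < n" using nim m2 unfolding g_def by auto
  qed
  have GA: "m < g x \<and> g x < n" if "x \<in> set as0" for x using gbig that by blast
  have GB: "m < g x \<and> g x < n" if "x \<in> set bs0" for x using gbig that by blast
  have YS: "1 \<le> y \<and> y \<le> m" if "y \<in> set ys" for y using ysm that by blast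
  have mn: "m < n" using nim assms(1) by simp
  have gmono: "x \<le> y \<Longrightarrow> g x \<le> g y" for x y unfolding g_def by simp
  have ginj: "inj g" unfolding g_def inj_def using m2 by auto
  show ?thesis
  proof
    assume av: "star p1 p2 \<in> Av n {[1,2,4,3], [2,1,4,3], [3,2,1]}"
    then have n321: "\<not> contains (star p1 p2) [3,2,1]" unfolding Av_def by auto
    have c1: "hd p1 = 1 \<or> hd p2 = 1"
    proof (rule ccontr)
      assume "\<not> ?thesis"
      then have ne: "as0 \<noteq> []" and b1: "b \<noteq> 1" using hd1 b_def by auto
      then obtain x where x: "x \<in> set as0" by (cases as0) auto
      have "1 \<in> set ys" using P2(3) p2e b1 m2 by auto
      then have q2: "subseq [b,1] (b # map g bs0 @ n # ys)" by (simp add: subseq_singleton_left)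
      have "subseq [g x] (map g as0)" using x by (simp add: subseq_singleton_left)
      from this q2 have "subseq ([g x] @ [b,1]) (map g as0 @ b # map g bs0 @ n # ys)"
        by (rule list_emb_append_mono)
      moreover have "b < g x" using GA[OF x] bm by linarith
      moreover have "1 < b" using bm b1 by auto
      ultimately have "contains (star p1 p2) [3,2,1]" unfolding contains_def st
        using iso3 by fastforce
      then show False using n321 by simp
    qed
    have c2: "sorted (filter (\<lambda>x. 2 \<le> x) p1)"
    proof (rule ccontr)
      assume "\<not> ?thesis"
      then obtain x y where xy: "subseq [x,y] (as0 @ bs0)" "y < x" using filt not_sorted_desc by metis
      have "subseq (map g [x,y]) (map g (as0 @ bs0))" using xy(1) by (rule subseq_map)
      then have "subseq [g x, g y] (map g as0 @ map g bs0)" by simp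
      moreover have "subseq (map g as0 @ map g bs0) (map g as0 @ b # map g bs0)"
        by (rule list_emb_append_mono) auto
      ultimately have s1: "subseq [g x, g y] (map g as0 @ b # map g bs0)" by (rule sub_tr)
      obtain z where z: "z \<in> set ys" using ysne by (cases ys) auto
      have "subseq [z] (n # ys)" using z by (simp add: subseq_singleton_left)
      with s1 have sub3: "subseq ([g x, g y] @ [z]) ((map g as0 @ b # map g bs0) @ (n # ys))"
        by (rule list_emb_append_mono)
      have "y \<in> set as0 \<union> set bs0"
        using subseq_setD[OF xy(1)] by auto
      then have "m < g y" using gbig by blast
      then have zy: "z < g y" using YS[OF z] by linarith
      have yx: "g y < g x" using xy(2) m2 unfolding g_def by simp
      from sub3 zy yx have "contains (star p1 p2) [3,2,1]" unfolding contains_def st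
        using iso3 by fastforce
      then show False using n321 by simp
    qed
    have c3: "sorted (tl p2)"
    proof (rule ccontr)
      assume "\<not> ?thesis"
      then obtain x y where xy: "subseq [x,y] ys" "y < x" using ys_def not_sorted_desc by metis
      then have "subseq [n,x,y] (n # ys)" by simp
      then have "subseq [n,x,y] ((map g as0 @ b # map g bs0) @ n # ys)" by (rule subseq_drop_many)
      moreover have "x \<in> set ys" using subseq_setD[OF xy(1)] by auto
      then have "x < n" using YS mn by fastforce
      ultimately have "contains (star p1 p2) [3,2,1]" unfolding contains_def st
        using iso3 xy(2) by fastforce
      then show False using n321 by simp
    qed
    show "(hd p1 = 1 \<or> hd p2 = 1) \<and> sorted (filter (\<lambda>x. 2 \<le> x) p1) \<and> sorted (tl p2)"
      using c1 c2 c3 by blast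
  next
    assume "(hd p1 = 1 \<or> hd p2 = 1) \<and> sorted (filter (\<lambda>x. 2 \<le> x) p1) \<and> sorted (tl p2)"
    then have c1: "as0 = [] \<or> b = 1" and c2: "sorted (as0 @ bs0)" and c3: "sorted ys"
      using hd1 filt b_def ys_def by auto
    have s1: "sorted (map g as0 @ map g bs0 @ [n])"
    proof -
      have "sorted (map g (as0 @ bs0))" using c2 gmono by (rule sorted_map_mono)
      moreover have "\<forall>x\<in>set (map g as0 @ map g bs0). x \<le> n" using GA GB by (auto intro: less_imp_le)
      ultimately have "sorted ((map g as0 @ map g bs0) @ [n])" by (simp add: sorted_append)
      then show ?thesis by simp
    qed
    have G1: "\<not> contains (star p1 p2) [3,2,1] \<and> \<not> contains (star p1 p2) [1,2,4,3]
        \<and> \<not> contains (star p1 p2) [2,1,4,3]"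
    proof (rule G[of _ "map g as0" b "map g bs0 @ [n]" ys])
      show "star p1 p2 = map g as0 @ b # (map g bs0 @ [n]) @ ys" using st by simp
      show "sorted (map g as0 @ map g bs0 @ [n])" using s1 .
      show "\<forall>x\<in>set (map g as0 @ map g bs0 @ [n]). b < x" using bm mn by (auto dest!: GA GB)
      show "\<forall>x\<in>set (map g as0 @ map g bs0 @ [n]). \<forall>y\<in>set ys. y < x"
        using mn by (fastforce dest!: GA GB YS)
      show "sorted ys" using c3 .
      show "map g as0 = [] \<or> (\<forall>y\<in>set ys. b < y)" using c1 ysm bny
      proof (cases "as0 = []")
        case False
        then have b1: "b = 1" using c1 by simp
        have "\<forall>y\<in>set ys. b < y"
        proof
          fix y assume "y \<in> set ys" then have "1 \<le> y" "y \<noteq> b" using YS bny by auto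
          then show "b < y" using b1 by simp
        qed
        then show ?thesis by simp
      qed simp
      show "b \<notin> set ys" using bny .
    qed
    have perm: "is_perm n (star p1 p2)"
    proof -
      have "length (star p1 p2) = n" using st P1(1) P2(1) p1e p2e nim by simp
      moreover have "distinct (star p1 p2)"
      proof -
        have "distinct (as0 @ bs0)" using P1(2) p1e by simp
        then have "distinct (map g as0 @ map g bs0)" using ginj
          by (metis distinct_map inj_on_subset map_append subset_UNIV)
        moreover have "b \<notin> set (map g as0 @ map g bs0)" using bm by (auto dest!: GA GB)
        moreover have "n \<notin> set (map g as0 @ map g bs0)" by (auto dest!: GA GB)
        moreover have "y \<notin> set (map g as0 @ map g bs0)" if "y \<in> set ys" for y
          using YS[OF that] by (auto dest!: GA GB)
        moreover have "n \<notin> set ys" using mn by (auto dest!: YS)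
        ultimately show ?thesis unfolding st using dys bny bm mn by auto
      qed
      moreover have "set (star p1 p2) = {1..n}"
      proof
        show "set (star p1 p2) \<subseteq> {1..n}" unfolding st using bm mn by (auto dest!: GA GB YS)
        show "{1..n} \<subseteq> set (star p1 p2)"
        proof
          fix x assume x: "x \<in> {1..n}"
          consider "x \<le> m" | "m < x \<and> x < n" | "x = n" using x by fastforce
          then show "x \<in> set (star p1 p2)"
          proof cases
            case 1 then have "x \<in> set p2" using P2(3) x by auto
            then have "x = b \<or> x \<in> set ys" using p2e by simp
            then show ?thesis unfolding st by auto
          next
            case 2
            define y where "y = x + 1 - m"
            have "y \<in> set p1" using P1(3) 2 nim unfolding y_def by auto
            moreover have "y \<noteq> 1" using 2 unfolding y_def by auto
            ultimately have "y \<in> set as0 \<union> set bs0" using p1e by auto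
            moreover have "g y = x" using 2 m2 unfolding y_def g_def by auto
            ultimately show ?thesis unfolding st by auto
          qed (auto simp: st)
        qed
      qed
      ultimately show ?thesis unfolding is_perm_def by simp
    qed
    show "star p1 p2 \<in> Av n {[1,2,4,3], [2,1,4,3], [3,2,1]}"
      unfolding Av_def using perm G1 by auto
  qed
qed

end
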